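(* Let $\bar Q=(Q,I)$ be a locally gentle bound quiver and let $\omega$ be a walk of $\bar Q$ that does not kiss itself. If $\omega$ contains as a factor a non-trivial oriented cycle $c$ of $Q$ with $c,c^2\notin I$, then $\omega$ (up to inversion) is of the form $\sigma c^{\pm\infty}$ for some (possibly infinite) substring $\sigma$, where $c^{\infty}=ccc\cdots$ and $c^{-\infty}=(c^{-1})^\infty$.
   Context: Locally gentle bound quiver $\bar Q=(Q,I)$: $Q$ finite, $I$ an ideal of $kQ$ generated by paths of length two ($kQ/I$ possibly infinite-dimensional), each vertex with at most two incoming and two outgoing arrows, and for each arrow $\beta$ at most one $\alpha$ with $t(\alpha)=s(\beta)$, $\alpha\beta\notin I$, at most one with $\alpha\beta\in I$, at most one $\gamma$ with $t(\beta)=s(\gamma)$, $\beta\gamma\notin I$, at most one with $\beta\gamma\in I$. $\bar Q^{\mathrm{bl}}$ adds degree-one blossom vertices and arrows so each vertex of $Q_0$ has two incoming and two outgoing arrows, relations completed to stay locally gentle. A finite string is a composable word $\alpha_1^{\varepsilon_1}\cdots\alpha_\ell^{\varepsilon_\ell}$ in arrows and formal inverses with no factor $\pi^{\pm1}$ for a path $\pi\in I$ and no factor $\alpha\alpha^{-1}$, $\alpha^{-1}\alpha$; an eventually cyclic string is ${}^\infty(c_1^{\varepsilon_1})\sigma(c_2^{\varepsilon_2})^\infty$ with $c_i$ oriented cycles (possibly of length zero) and $c_1^{2\varepsilon_1}\sigma c_2^{2\varepsilon_2}$ a finite string. A walk is a maximal (finite or eventually cyclic) string of $\bar Q^{\mathrm{bl}}$,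 identified with its inverse. For $\omega=\prod_{i<\ell<j}\alpha_\ell^{\varepsilon_\ell}$, a substring $\prod_{i'<\ell<j'}\alpha_\ell^{\varepsilon_\ell}$ ($i\le i'<j'\le j$, strict at finite ends, remembered with its position) is on top if ($i'=-\infty$ or $\varepsilon_{i'}=-1$) and ($j'=\infty$ or $\varepsilon_{j'}=1$), at the bottom if ($i'=-\infty$ or $\varepsilon_{i'}=1$) and ($j'=\infty$ or $\varepsilon_{j'}=-1$). $\omega$ kisses itself if some finite string occurs (at possibly different positions) as a top substring and as a bottom substring of $\omega$. *)

theory Defs
  imports Main
begin

text \<open>A bound quiver (Q,I): vertices, arrows, source/target maps, and the set of
  generating relations of I (paths of length two, given as pairs of composable arrows).\<close>
record ('v, 'a) bquiver =
  verts :: "'v set"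
  arrs  :: "'a set"
  qsrc  :: "'a \<Rightarrow> 'v"
  qtgt  :: "'a \<Rightarrow> 'v"
  rels  :: "('a \<times> 'a) set"

definition wf_bquiver :: "('v, 'a) bquiver \<Rightarrow> bool" where
  "wf_bquiver Q \<longleftrightarrow>
     (\<forall>a\<in>arrs Q. qsrc Q a \<in> verts Q \<and> qtgt Q a \<in> verts Q) \<and>
     rels Q \<subseteq> {(a, b). a \<in> arrs Q \<and> b \<in> arrs Q \<and> qtgt Q a = qsrc Q b}"

definition locally_gentle :: "('v, 'a) bquiver \<Rightarrow> bool" where
  "locally_gentle Q \<longleftrightarrow> wf_bquiver Q \<and> finite (verts Q) \<and> finite (arrs Q) \<and>
     (\<forall>v\<in>verts Q. card {a\<in>arrs Q. qtgt Q a = v} \<le> 2 \<and> card {a\<in>arrs Q. qsrc Q a = v} \<le> 2) \<and>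
     (\<forall>\<beta>\<in>arrs Q.
        card {\<alpha>\<in>arrs Q. qtgt Q \<alpha> = qsrc Q \<beta> \<and> (\<alpha>, \<beta>) \<notin> rels Q} \<le> 1 \<and>
        card {\<alpha>\<in>arrs Q. qtgt Q \<alpha> = qsrc Q \<beta> \<and> (\<alpha>, \<beta>) \<in> rels Q} \<le> 1 \<and>
        card {\<gamma>\<in>arrs Q. qtgt Q \<beta> = qsrc Q \<gamma> \<and> (\<beta>, \<gamma>) \<notin> rels Q} \<le> 1 \<and>
        card {\<gamma>\<in>arrs Q. qtgt Q \<beta> = qsrc Q \<gamma> \<and> (\<beta>, \<gamma>) \<in> rels Q} \<le> 1)"

definition is_blossoming :: "('v, 'a) bquiver \<Rightarrow> ('v, 'a) bquiver \<Rightarrow> bool" where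
  "is_blossoming Q Qb \<longleftrightarrow>
     verts Q \<subseteq> verts Qb \<and> arrs Q \<subseteq> arrs Qb \<and>
     (\<forall>a\<in>arrs Q. qsrc Qb a = qsrc Q a \<and> qtgt Qb a = qtgt Q a) \<and>
     rels Qb \<inter> (arrs Q \<times> arrs Q) = rels Q \<and>
     (\<forall>a\<in>arrs Qb - arrs Q.
        (qsrc Qb a \<in> verts Q \<and> qtgt Qb a \<in> verts Qb - verts Q) \<or>
        (qsrc Qb a \<in> verts Qb - verts Q \<and> qtgt Qb a \<in> verts Q)) \<and>
     (\<forall>v\<in>verts Qb - verts Q. card {a\<in>arrs Qb. qsrc Qb a = v \<or> qtgt Qb a = v} = 1) \<and>
     (\<forall>v\<in>verts Q. card {a\<in>arrs Qb. qtgt Qb a = v} = 2 \<and> card {a\<in>arrs Qb. qsrc Qb a = v} = 2) \<and>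
     locally_gentle Qb"

text \<open>Since I is generated by the paths of length two in rels Q, a path (list of arrows)
  lies in I iff it contains one of them as a factor.\<close>
definition path_in_ideal :: "('v, 'a) bquiver \<Rightarrow> 'a list \<Rightarrow> bool" where
  "path_in_ideal Q p \<longleftrightarrow> (\<exists>i. Suc i < length p \<and> (p ! i, p ! Suc i) \<in> rels Q)"

definition is_oriented_cycle :: "('v, 'a) bquiver \<Rightarrow> 'a list \<Rightarrow> bool" where
  "is_oriented_cycle Q c \<longleftrightarrow> c \<noteq> [] \<and> set c \<subseteq> arrs Q \<and>
     (\<forall>i. Suc i < length c \<longrightarrow> qtgt Q (c ! i) = qsrc Q (c ! Suc i)) \<and>
     qtgt Q (last c) = qsrc Q (hd c)"

text \<open>A letter is an arrow with an orientation: (\<alpha>, True) is \<alpha>, (\<alpha>, False) is its formal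
  inverse. A (possibly infinite) word is represented by bounds lo, hi (None = infinite)
  and a map w; the letters are w l for lo < l < hi.\<close>
type_synonym 'a letter = "'a \<times> bool"

definition lsrc :: "('v, 'a) bquiver \<Rightarrow> 'a letter \<Rightarrow> 'v" where
  "lsrc Q x = (if snd x then qsrc Q (fst x) else qtgt Q (fst x))"

definition ltgt :: "('v, 'a) bquiver \<Rightarrow> 'a letter \<Rightarrow> 'v" where
  "ltgt Q x = (if snd x then qtgt Q (fst x) else qsrc Q (fst x))"

text \<open>Two consecutive letters x y are allowed in a string: composable, not of the form
  \<alpha>\<alpha>\<inverse> or \<alpha>\<inverse>\<alpha>, and not a factor \<pi> or \<pi>\<inverse> with \<pi> a path in I (as I is generated
  by paths of length two, it suffices to exclude the generators).\<close>
definition string_step :: "('v, 'a) bquiver \<Rightarrow> 'a letter \<Rightarrow> 'a letter \<Rightarrow> bool" where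
  "string_step Q x y \<longleftrightarrow> ltgt Q x = lsrc Q y \<and>
     \<not> (fst x = fst y \<and> snd x \<noteq> snd y) \<and>
     (snd x \<and> snd y \<longrightarrow> (fst x, fst y) \<notin> rels Q) \<and>
     (\<not> snd x \<and> \<not> snd y \<longrightarrow> (fst y, fst x) \<notin> rels Q)"

definition in_dom :: "int option \<Rightarrow> int option \<Rightarrow> int \<Rightarrow> bool" where
  "in_dom lo hi l \<longleftrightarrow> (case lo of None \<Rightarrow> True | Some i \<Rightarrow> i < l) \<and>
                      (case hi of None \<Rightarrow> True | Some j \<Rightarrow> l < j)"

definition is_string :: "('v, 'a) bquiver \<Rightarrow> int option \<Rightarrow> int option \<Rightarrow> (int \<Rightarrow> 'a letter) \<Rightarrow> bool" where
  "is_string Q lo hi w \<longleftrightarrow>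
     (\<forall>l. in_dom lo hi l \<longrightarrow> fst (w l) \<in> arrs Q) \<and>
     (\<forall>l. in_dom lo hi l \<and> in_dom lo hi (l + 1) \<longrightarrow> string_step Q (w l) (w (l + 1)))"

text \<open>Finite or eventually cyclic: each infinite end is eventually a power of an oriented
  cycle, taken directly or inversely (periodic with constant orientation).\<close>
definition eventually_cyclic :: "int option \<Rightarrow> int option \<Rightarrow> (int \<Rightarrow> 'a letter) \<Rightarrow> bool" where
  "eventually_cyclic lo hi w \<longleftrightarrow>
     (lo = None \<longrightarrow> (\<exists>n p. p > 0 \<and> (\<forall>l\<le>n. w (l - p) = w l \<and> snd (w l) = snd (w n)))) \<and>
     (hi = None \<longrightarrow> (\<exists>n p. p > 0 \<and> (\<forall>l\<ge>n. w (l + p) = w l \<and> snd (w l) = snd (w n))))"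

definition maximal_string :: "('v, 'a) bquiver \<Rightarrow> int option \<Rightarrow> int option \<Rightarrow> (int \<Rightarrow> 'a letter) \<Rightarrow> bool" where
  "maximal_string Q lo hi w \<longleftrightarrow>
     (\<forall>i. lo = Some i \<longrightarrow> \<not> (\<exists>x. fst x \<in> arrs Q \<and> string_step Q x (w (i + 1)))) \<and>
     (\<forall>j. hi = Some j \<longrightarrow> \<not> (\<exists>x. fst x \<in> arrs Q \<and> string_step Q (w (j - 1)) x))"

definition is_walk :: "('v, 'a) bquiver \<Rightarrow> int option \<Rightarrow> int option \<Rightarrow> (int \<Rightarrow> 'a letter) \<Rightarrow> bool" where
  "is_walk Qb lo hi w \<longleftrightarrow> is_string Qb lo hi w \<and> (\<exists>l. in_dom lo hi l) \<and>
     eventually_cyclic lo hi w \<and> maximal_string Qb lo hi w"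

definition inv_word :: "(int \<Rightarrow> 'a letter) \<Rightarrow> int \<Rightarrow> 'a letter" where
  "inv_word w l = (fst (w (- l)), \<not> snd (w (- l)))"

text \<open>Self-kissing: a finite substring strictly between positions i1 < j1 is on top
  (letter i1 inverse, letter j1 direct), one strictly between i2 < j2 is at the bottom
  (letter i2 direct, letter j2 inverse), and they are the same string (same start vertex,
  same length, same letters).  Finite substrings are bounded by existing letters.\<close>
definition kisses_itself :: "('v, 'a) bquiver \<Rightarrow> int option \<Rightarrow> int option \<Rightarrow> (int \<Rightarrow> 'a letter) \<Rightarrow> bool" where
  "kisses_itself Q lo hi w \<longleftrightarrow>
     (\<exists>i1 j1 i2 j2. i1 < j1 \<and> i2 < j2 \<and>
        in_dom lo hi i1 \<and> in_dom lo hi j1 \<and> in_dom lo hi i2 \<and> in_dom lo hi j2 \<and>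
        \<not> snd (w i1) \<and> snd (w j1) \<and> snd (w i2) \<and> \<not> snd (w j2) \<and>
        j1 - i1 = j2 - i2 \<and> ltgt Q (w i1) = ltgt Q (w i2) \<and>
        (\<forall>k. 0 < k \<and> k < j1 - i1 \<longrightarrow> w (i1 + k) = w (i2 + k)))"

definition has_factor :: "int option \<Rightarrow> int option \<Rightarrow> (int \<Rightarrow> 'a letter) \<Rightarrow> 'a list \<Rightarrow> bool" where
  "has_factor lo hi w c \<longleftrightarrow>
     (\<exists>n. \<forall>k < length c. in_dom lo hi (n + int k) \<and> w (n + int k) = (c ! k, True))"

definition ends_with_cycle_power :: "int option \<Rightarrow> int option \<Rightarrow> (int \<Rightarrow> 'a letter) \<Rightarrow> 'a list \<Rightarrow> bool" where
  "ends_with_cycle_power lo hi w c \<longleftrightarrow> hi = None \<and>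
     (\<exists>n. in_dom lo hi n \<and>
        ((\<forall>k::nat. w (n + int k) = (c ! (k mod length c), True)) \<or>
         (\<forall>k::nat. w (n + int k) = (c ! (length c - 1 - k mod length c), False))))"

end

theory Submission
  imports Defs
begin

definition cyc :: "'a list \<Rightarrow> int \<Rightarrow> 'a" where
  "cyc c t = c ! nat (t mod int (length c))"

lemma cyc_idx: "c \<noteq> [] \<Longrightarrow> nat (t mod int (length c)) < length c"
  by (simp add: nat_less_iff)

lemma cyc_in: "is_oriented_cycle Q c \<Longrightarrow> cyc c t \<in> arrs Q"
  unfolding is_oriented_cycle_def cyc_def using cyc_idx by (metis nth_mem subsetD)

lemma cyc_per: "cyc c (t + int (length c)) = cyc c t"
  by (simp add: cyc_def)

lemma cyc_succ_idx:
  assumes "c \<noteq> []"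
  shows "nat ((t + 1) mod int (length c)) =
     (if Suc (nat (t mod int (length c))) < length c then Suc (nat (t mod int (length c))) else 0)"
proof -
  let ?p = "int (length c)"
  have p: "?p > 0" using assms by simp
  have a: "(t + 1) mod ?p = (t mod ?p + 1) mod ?p" by (simp add: mod_simps)
  have b: "0 \<le> t mod ?p" "t mod ?p < ?p" using p by auto
  show ?thesis
  proof (cases "t mod ?p + 1 < ?p")
    case True
    then have "(t mod ?p + 1) mod ?p = t mod ?p + 1" using b by simp
    then show ?thesis using a True b by (simp add: nat_add_distrib)
  next
    case False
    then have eq: "t mod ?p + 1 = ?p" using b by simp
    then have "(t + 1) mod ?p = 0" using a by simp
    moreover have "\<not> Suc (nat (t mod ?p)) < length c" using eq b by linarith
    ultimately show ?thesis by simp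
  qed
qed

lemma cyc_cycle:
  assumes "is_oriented_cycle Q c"
  shows "qtgt Q (cyc c t) = qsrc Q (cyc c (t + 1))"
proof -
  have ne: "c \<noteq> []" using assms unfolding is_oriented_cycle_def by auto
  let ?i = "nat (t mod int (length c))"
  have i: "?i < length c" using cyc_idx ne .
  show ?thesis
  proof (cases "Suc ?i < length c")
    case True
    then show ?thesis using assms cyc_succ_idx[OF ne, of t]
      unfolding is_oriented_cycle_def cyc_def by auto
  next
    case False
    then have "?i = length c - 1" using i by auto
    then have "c ! ?i = last c" using ne by (simp add: last_conv_nth)
    moreover have "hd c = c ! 0" using ne by (simp add: hd_conv_nth)
    ultimately show ?thesis using assms cyc_succ_idx[OF ne, of t] False
      unfolding is_oriented_cycle_def cyc_def by auto
  qed
qed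

lemma cyc_norel:
  assumes "is_oriented_cycle Q c" "\<not> path_in_ideal Q (c @ c)"
  shows "(cyc c t, cyc c (t + 1)) \<notin> rels Q"
proof -
  have ne: "c \<noteq> []" using assms unfolding is_oriented_cycle_def by auto
  let ?i = "nat (t mod int (length c))"
  have i: "?i < length c" using cyc_idx ne .
  have "\<not> ((c @ c) ! ?i, (c @ c) ! Suc ?i) \<in> rels Q"
    using assms(2) i unfolding path_in_ideal_def by auto
  moreover have "(c @ c) ! ?i = cyc c t" using i by (simp add: nth_append cyc_def)
  moreover have "(c @ c) ! Suc ?i = cyc c (t + 1)"
    using i cyc_succ_idx[OF ne, of t] by (auto simp add: nth_append cyc_def)
  ultimately show ?thesis by simp
qed

lemma uniq_succ:
  assumes "locally_gentle Qb" "b \<in> arrs Qb" "g1 \<in> arrs Qb" "g2 \<in> arrs Qb"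
    "qtgt Qb b = qsrc Qb g1" "qtgt Qb b = qsrc Qb g2" "(b, g1) \<notin> rels Qb" "(b, g2) \<notin> rels Qb"
  shows "g1 = g2"
proof -
  let ?S = "{\<gamma>\<in>arrs Qb. qtgt Qb b = qsrc Qb \<gamma> \<and> (b, \<gamma>) \<notin> rels Qb}"
  have "card ?S \<le> 1" "finite (arrs Qb)" using assms(1,2) unfolding locally_gentle_def by auto
  then have "card ?S \<le> Suc 0" "finite ?S" by auto
  then show ?thesis using assms card_le_Suc0_iff_eq by (smt (verit) mem_Collect_eq)
qed

lemma uniq_pred:
  assumes "locally_gentle Qb" "b \<in> arrs Qb" "g1 \<in> arrs Qb" "g2 \<in> arrs Qb"
    "qtgt Qb g1 = qsrc Qb b" "qtgt Qb g2 = qsrc Qb b" "(g1, b) \<notin> rels Qb" "(g2, b) \<notin> rels Qb"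
  shows "g1 = g2"
proof -
  let ?S = "{\<alpha>\<in>arrs Qb. qtgt Qb \<alpha> = qsrc Qb b \<and> (\<alpha>, b) \<notin> rels Qb}"
  have "card ?S \<le> 1" "finite (arrs Qb)" using assms(1,2) unfolding locally_gentle_def by auto
  then have "card ?S \<le> Suc 0" "finite ?S" by auto
  then show ?thesis using assms card_le_Suc0_iff_eq by (smt (verit) mem_Collect_eq)
qed

lemma in_dom_inv: "in_dom (map_option uminus hi) (map_option uminus lo) l \<longleftrightarrow> in_dom lo hi (- l)"
  unfolding in_dom_def by (cases lo; cases hi; auto)

lemma mod_neg_aux:
  assumes "(p::nat) > 0"
  shows "nat ((-1 - int k) mod int p) = p - 1 - k mod p"
proof -
  have e: "-1 - int k = (int p - 1 - int (k mod p)) + (- int (k div p) - 1) * int p"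
    by (simp add: algebra_simps) (metis of_nat_add of_nat_mult mult.commute div_mult_mod_eq add.commute)
  have "k mod p < p" using assms by simp
  then have "(int p - 1 - int (k mod p)) mod int p = int p - 1 - int (k mod p)" by simp
  then have "(-1 - int k) mod int p = int p - 1 - int (k mod p)" by (subst e) simp
  then show ?thesis using \<open>k mod p < p\<close> by simp
qed


theorem lemma5p9:
  fixes Q Qb :: "('v, 'a) bquiver"
    and lo hi :: "int option" and w :: "int \<Rightarrow> 'a \<times> bool"
    and c :: "'a list"
  assumes "locally_gentle Q"
    and "is_blossoming Q Qb"
    and "is_walk Qb lo hi w"
    and "\<not> kisses_itself Qb lo hi w"
    and "is_oriented_cycle Q c"
    and "\<not> path_in_ideal Q c"
    and "\<not> path_in_ideal Q (c @ c)"
    and "has_factor lo hi w c"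
  shows "ends_with_cycle_power lo hi w c \<or>
         ends_with_cycle_power (map_option uminus hi) (map_option uminus lo) (inv_word w) c"
proof -
  note bl = assms(2)[unfolded is_blossoming_def]
  have lgb: "locally_gentle Qb" using bl by blast
  have ne: "c \<noteq> []" using assms(5) unfolding is_oriented_cycle_def by auto
  define p where "p = length c"
  have p0: "p > 0" using ne p_def by simp
  have inQb: "cyc c t \<in> arrs Qb" for t using cyc_in[OF assms(5)] bl by blast
  have srcb: "qsrc Qb (cyc c t) = qsrc Q (cyc c t)" for t using cyc_in[OF assms(5)] bl by blast
  have tgtb: "qtgt Qb (cyc c t) = qtgt Q (cyc c t)" for t using cyc_in[OF assms(5)] bl by blast
  have cycb: "qtgt Qb (cyc c t) = qsrc Qb (cyc c (t + 1))" for t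
    using srcb tgtb cyc_cycle[OF assms(5)] by simp
  have norelb: "(cyc c t, cyc c (t + 1)) \<notin> rels Qb" for t
  proof
    assume "(cyc c t, cyc c (t + 1)) \<in> rels Qb"
    then have "(cyc c t, cyc c (t + 1)) \<in> rels Q" using bl cyc_in[OF assms(5)] by blast
    then show False using cyc_norel[OF assms(5,7)] by blast
  qed
  have str: "is_string Qb lo hi w" and mx: "maximal_string Qb lo hi w"
    using assms(3) unfolding is_walk_def by auto
  obtain n where n: "\<forall>k < length c. in_dom lo hi (n + int k) \<and> w (n + int k) = (c ! k, True)"
    using assms(8) unfolding has_factor_def by blast
  define D where "D u \<longleftrightarrow> in_dom lo hi (n + u) \<and> w (n + u) = (cyc c u, True)" for u
  have Dinit: "D (int k)" if "k < p" for k
  proof -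
    have "nat (int k mod int p) = k" using that by simp
    then show ?thesis using n that unfolding D_def cyc_def p_def by auto
  qed
  have fwd: "in_dom lo hi (n + u + 1) \<and> \<not> snd (w (n + u + 1))" if "D u" "\<not> D (u + 1)" for u
  proof -
    have d: "in_dom lo hi (n + u)" and wu: "w (n + u) = (cyc c u, True)" using that D_def by auto
    have st: "string_step Qb (w (n + u)) (cyc c (u + 1), True)"
      using wu cycb norelb unfolding string_step_def lsrc_def ltgt_def by auto
    have dd: "in_dom lo hi (n + u + 1)"
    proof -
      have "l < j" if "hi = Some j" and "l = n + u + 1" for j l
      proof (rule ccontr)
        assume "\<not> l < j"
        moreover have "n + u < j" using d that(1) unfolding in_dom_def by auto
        ultimately have "j - 1 = n + u" using that by simp
        then show False using mx st inQb that(1) unfolding maximal_string_def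
          by (metis fst_conv)
      qed
      moreover have "i < n + u + 1" if "lo = Some i" for i using d that unfolding in_dom_def by auto
      ultimately show ?thesis unfolding in_dom_def by (auto split: option.splits)
    qed
    have st2: "string_step Qb (w (n + u)) (w (n + u + 1))" and ar: "fst (w (n + u + 1)) \<in> arrs Qb"
      using str d dd unfolding is_string_def by (auto simp: add.assoc)
    have "\<not> snd (w (n + u + 1))"
    proof
      assume sn: "snd (w (n + u + 1))"
      have "fst (w (n + u + 1)) = cyc c (u + 1)"
        apply (rule uniq_succ[OF lgb inQb[of u] ar inQb[of "u+1"]])
        using st2 sn wu cycb norelb unfolding string_step_def lsrc_def ltgt_def by auto
      then have "w (n + u + 1) = (cyc c (u + 1), True)" using sn by (metis prod.collapse)
      then show False using that(2) dd unfolding D_def by (simp add: add.assoc)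
    qed
    then show ?thesis using dd by simp
  qed
  have bwd: "in_dom lo hi (n + u - 1) \<and> \<not> snd (w (n + u - 1))" if "D u" "\<not> D (u - 1)" for u
  proof -
    have d: "in_dom lo hi (n + u)" and wu: "w (n + u) = (cyc c u, True)" using that D_def by auto
    have cb: "qtgt Qb (cyc c (u - 1)) = qsrc Qb (cyc c u)" using cycb[of "u - 1"] by simp
    have nr: "(cyc c (u - 1), cyc c u) \<notin> rels Qb" using norelb[of "u - 1"] by simp
    have st: "string_step Qb (cyc c (u - 1), True) (w (n + u))"
      using wu cb nr unfolding string_step_def lsrc_def ltgt_def by auto
    have dd: "in_dom lo hi (n + u - 1)"
    proof -
      have "i < l" if "lo = Some i" and "l = n + u - 1" for i l
      proof (rule ccontr)
        assume "\<not> i < l"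
        moreover have "i < n + u" using d that(1) unfolding in_dom_def by auto
        ultimately have "i + 1 = n + u" using that by simp
        then show False using mx st inQb that(1) unfolding maximal_string_def
          by (metis fst_conv)
      qed
      moreover have "n + u - 1 < j" if "hi = Some j" for j using d that unfolding in_dom_def by auto
      ultimately show ?thesis unfolding in_dom_def by (auto split: option.splits)
    qed
    have st2: "string_step Qb (w (n + u - 1)) (w (n + u))" and ar: "fst (w (n + u - 1)) \<in> arrs Qb"
      using str d dd unfolding is_string_def by auto
    have "\<not> snd (w (n + u - 1))"
    proof
      assume sn: "snd (w (n + u - 1))"
      have "fst (w (n + u - 1)) = cyc c (u - 1)"
        apply (rule uniq_pred[OF lgb inQb[of u] ar inQb[of "u-1"]])
        using st2 sn wu cb nr unfolding string_step_def lsrc_def ltgt_def by auto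
      then have "w (n + u - 1) = (cyc c (u - 1), True)" using sn by (metis prod.collapse)
      then show False using that(2) dd unfolding D_def by (simp add: algebra_simps)
    qed
    then show ?thesis using dd by simp
  qed
  show ?thesis
  proof (cases "\<forall>k::nat. D (int k)")
    case allF: True
    have "hi = None"
    proof (cases hi)
      case (Some j)
      then show ?thesis using allF[rule_format, of "nat (\<bar>j - n\<bar>)"] unfolding D_def in_dom_def by auto
    qed
    moreover have "in_dom lo hi (n + 0)" using allF D_def by (metis of_nat_0)
    moreover have "w (n + int k) = (c ! (k mod length c), True)" for k
    proof -
      have "nat (int k mod int p) = k mod p" by (simp add: nat_mod_as_int)
      then show ?thesis using allF unfolding D_def cyc_def p_def by auto
    qed
    ultimately show ?thesis unfolding ends_with_cycle_power_def by auto
  next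
    case False
    then obtain t0 where t0: "\<not> D (int t0)" "\<forall>k<t0. D (int k)"
      using exists_least_iff[of "\<lambda>k. \<not> D (int k)"] by auto
    have t0p: "t0 \<ge> p" using t0 Dinit by (meson not_le)
    show ?thesis
    proof (cases "\<forall>k::nat. D (- int k)")
      case allB: True
      have "lo = None"
      proof (cases lo)
        case (Some i)
        then show ?thesis using allB[rule_format, of "nat (\<bar>n - i\<bar>)"] unfolding D_def in_dom_def by auto
      qed
      moreover have "in_dom (map_option uminus hi) (map_option uminus lo) (1 - n)"
        using allB[rule_format, of 1] unfolding in_dom_inv D_def by simp
      moreover have "inv_word w (1 - n + int k) = (c ! (length c - 1 - k mod length c), False)" for k
      proof -
        have "D (- int (Suc k))" using allB by blast
        then have "w (n - 1 - int k) = (cyc c (-1 - int k), True)" unfolding D_def by (simp add: algebra_simps)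
        moreover have "cyc c (-1 - int k) = c ! (length c - 1 - k mod length c)"
          unfolding cyc_def using mod_neg_aux[OF p0[unfolded p_def]] by simp
        ultimately show ?thesis unfolding inv_word_def by (simp add: algebra_simps)
      qed
      ultimately have "ends_with_cycle_power (map_option uminus hi) (map_option uminus lo) (inv_word w) c"
        unfolding ends_with_cycle_power_def by auto
      then show ?thesis by blast
    next
      case False
      then obtain s0 where s0: "\<not> D (- int s0)" "\<forall>k<s0. D (- int k)"
        using exists_least_iff[of "\<lambda>k. \<not> D (- int k)"] by auto
      have s01: "s0 \<ge> 1" using s0 Dinit p0 by (metis less_one not_le of_nat_0 neg_0_equal_iff_equal)
      have Dmid: "D u" if "- int s0 < u" "u < int t0" for u
      proof (cases "u \<ge> 0")
        case True
        then show ?thesis using t0(2)[rule_format, of "nat u"] that by simp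
      next
        case False
        then show ?thesis using s0(2)[rule_format, of "nat (- u)"] that by simp
      qed
      have F: "in_dom lo hi (n + int t0) \<and> \<not> snd (w (n + int t0))"
        using fwd[of "int t0 - 1"] Dmid[of "int t0 - 1"] t0 t0p p0 s01 by simp
      have B: "in_dom lo hi (n - int s0) \<and> \<not> snd (w (n - int s0))"
        using bwd[of "1 - int s0"] Dmid[of "1 - int s0"] s0 s01 t0p p0 by simp
      define i where "i = n - int s0"
      define j where "j = n + int t0"
      have Dw: "in_dom lo hi (i + k) \<and> w (i + k) = (cyc c (k - int s0), True)"
        if "0 < k" "k < int t0 + int s0" for k
        using Dmid[of "k - int s0"] that unfolding D_def i_def by (simp add: algebra_simps)
      have K: "kisses_itself Qb lo hi w"
        unfolding kisses_itself_def
      proof (intro exI conjI allI impI)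
        show "i < j - int p" "i + int p < j" using t0p s01 i_def j_def by auto
        show "in_dom lo hi i" "in_dom lo hi j" "\<not> snd (w i)" "\<not> snd (w j)"
          using F B i_def j_def by auto
        have j1: "j - int p = i + (int t0 + int s0 - int p)" using i_def j_def by simp
        show "in_dom lo hi (j - int p)" "snd (w (j - int p))"
          unfolding j1 using Dw[of "int t0 + int s0 - int p"] s01 p0 t0p by auto
        show "in_dom lo hi (i + int p)" "snd (w (i + int p))"
          using Dw[of "int p"] s01 p0 t0p by auto
        show "j - int p - i = j - (i + int p)" by simp
        have "ltgt Qb (w i) = lsrc Qb (w (i + 1))"
          using str F B Dw[of 1] s01 p0 t0p unfolding is_string_def string_step_def i_def by auto
        also have "\<dots> = qsrc Qb (cyc c (1 - int s0))"
          using Dw[of 1] s01 p0 t0p unfolding lsrc_def by auto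
        also have "\<dots> = qtgt Qb (cyc c (int p - int s0))"
          using cycb[of "int p - int s0"] cyc_per[of c "1 - int s0"] p_def by (simp add: algebra_simps)
        also have "\<dots> = ltgt Qb (w (i + int p))"
          using Dw[of "int p"] s01 p0 t0p unfolding ltgt_def by auto
        finally show "ltgt Qb (w i) = ltgt Qb (w (i + int p))" .
        fix k assume k: "0 < k \<and> k < j - int p - i"
        have "w (i + k) = (cyc c (k - int s0), True)" using Dw[of k] k j_def i_def by auto
        moreover have "w (i + int p + k) = (cyc c (k + int p - int s0), True)"
          using Dw[of "k + int p"] k j_def i_def by (auto simp: algebra_simps)
        moreover have "cyc c (k + int p - int s0) = cyc c (k - int s0)"
          using cyc_per[of c "k - int s0"] p_def by (simp add: algebra_simps)
        ultimately show "w (i + k) = w (i + int p + k)" by simp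
      qed
      then show ?thesis using assms(4) by blast
    qed
  qed
qed

end
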